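(* For every $u\in W^{1,\gamma}(\Omega)$ there exists a unique $\kappa\in\mathbb{R}$ such that \[ \int_{\Gamma_D}(u+\kappa)_+^{\gamma-1}\,ds=\int_{\Gamma_N}j\,ds. \]
   Context: $\Omega\subset\mathbb{R}^d$ is open, bounded, connected, with $C^1$ boundary $\Gamma=\partial\Omega$; $ds$ denotes the surface measure $d\mathcal{H}^{d-1}$. $\Gamma=\overline{\Gamma_D\cup\Gamma_N}$, where $\Gamma_D,\Gamma_N$ are disjoint, nonempty, relatively open $C^1$ $(d-1)$-dimensional manifolds of positive $\mathcal{H}^{d-1}$-measure with $\mathcal{H}^{d-1}(\partial\Gamma_D\cap\partial\Gamma_N)=0$. The boundary values of $u$ are its trace. Exponents: $\alpha>1$, $\beta>0$, $\gamma=\frac{\beta+1}{\beta}\alpha$, $\gamma'=\gamma/(\gamma-1)$. $j\in L^{\gamma'}(\Gamma_N)$ with $j\ge0$, $j\not\equiv0$. $q_+=\max\{q,0\}$. *)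

theory Defs
  imports "HOL-Analysis.Analysis"
begin

text \<open>Normalising constant omega_m = pi^(m/2) / Gamma(m/2+1) (volume of the unit m-ball).\<close>
definition haus_const :: "nat \<Rightarrow> real" where
  "haus_const m = pi powr (real m / 2) / Gamma (real m / 2 + 1)"

text \<open>Contribution of one covering set; the empty set contributes 0
  (convention diam(empty)^0 = 0).\<close>
definition haus_piece :: "nat \<Rightarrow> 'a::metric_space set \<Rightarrow> ennreal" where
  "haus_piece m C = (if C = {} then 0 else ennreal (haus_const m * (diameter C / 2) ^ m))"

definition haus_delta :: "nat \<Rightarrow> real \<Rightarrow> 'a::metric_space set \<Rightarrow> ennreal" where
  "haus_delta m \<delta> A =
     (INF C \<in> {C :: nat \<Rightarrow> 'a set. A \<subseteq> (\<Union>n. C n) \<and> (\<forall>n. diameter (C n) \<le> \<delta>)}.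
        (\<Sum>n. haus_piece m (C n)))"

definition hausdorff_measure :: "nat \<Rightarrow> 'a::metric_space set \<Rightarrow> ennreal" where
  "hausdorff_measure m A = (SUP \<delta> \<in> {0<..}. haus_delta m \<delta> A)"

definition surface_measure :: "'a::euclidean_space measure" where
  "surface_measure = measure_of UNIV (sets borel) (hausdorff_measure (DIM('a) - 1))"

definition grad :: "('a::euclidean_space \<Rightarrow> real) \<Rightarrow> 'a \<Rightarrow> 'a" where
  "grad f x = (\<Sum>b\<in>Basis. frechet_derivative f (at x) b *\<^sub>R b)"

definition C1_fun :: "('a::euclidean_space \<Rightarrow> real) \<Rightarrow> bool" where
  "C1_fun f \<longleftrightarrow> (\<forall>x. f differentiable (at x)) \<and> continuous_on UNIV (grad f)"

text \<open>C^1 boundary: near each boundary point, after choosing a direction e, Omega is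
  the region below the graph of a C^1 function (constant along e).\<close>
definition C1_boundary :: "'a::euclidean_space set \<Rightarrow> bool" where
  "C1_boundary \<Omega> \<longleftrightarrow>
     (\<forall>x\<in>frontier \<Omega>. \<exists>e r h. norm e = 1 \<and> r > 0 \<and> C1_fun h \<and>
        (\<forall>y t. h (y + t *\<^sub>R e) = h y) \<and>
        \<Omega> \<inter> ball x r = {y \<in> ball x r. y \<bullet> e < h y})"

definition tsupp :: "('a::topological_space \<Rightarrow> real) \<Rightarrow> 'a set" where
  "tsupp \<phi> = closure {x. \<phi> x \<noteq> 0}"

definition Lp_fun :: "'a measure \<Rightarrow> real \<Rightarrow> ('a \<Rightarrow> real) \<Rightarrow> bool" where
  "Lp_fun M p f \<longleftrightarrow> f \<in> borel_measurable M \<and> integrable M (\<lambda>x. \<bar>f x\<bar> powr p)"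

definition Lp_vec :: "'a measure \<Rightarrow> real \<Rightarrow> ('a \<Rightarrow> 'b::euclidean_space) \<Rightarrow> bool" where
  "Lp_vec M p F \<longleftrightarrow> F \<in> borel_measurable M \<and> integrable M (\<lambda>x. norm (F x) powr p)"

definition weak_grad :: "'a::euclidean_space set \<Rightarrow> ('a \<Rightarrow> real) \<Rightarrow> ('a \<Rightarrow> 'a) \<Rightarrow> bool" where
  "weak_grad \<Omega> u G \<longleftrightarrow>
     (\<forall>\<phi>. C1_fun \<phi> \<and> compact (tsupp \<phi>) \<and> tsupp \<phi> \<subseteq> \<Omega> \<longrightarrow>
        (\<forall>b\<in>Basis. (LINT x:\<Omega>|lebesgue. u x * (grad \<phi> x \<bullet> b))
                    = - (LINT x:\<Omega>|lebesgue. (G x \<bullet> b) * \<phi> x)))"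

definition sobolev :: "'a::euclidean_space set \<Rightarrow> real \<Rightarrow> ('a \<Rightarrow> real) \<Rightarrow> ('a \<Rightarrow> 'a) \<Rightarrow> bool" where
  "sobolev \<Omega> p u G \<longleftrightarrow> Lp_fun (lebesgue_on \<Omega>) p u \<and> Lp_vec (lebesgue_on \<Omega>) p G \<and> weak_grad \<Omega> u G"

definition is_trace :: "'a::euclidean_space set \<Rightarrow> real \<Rightarrow> ('a \<Rightarrow> real) \<Rightarrow> ('a \<Rightarrow> 'a)
                         \<Rightarrow> ('a \<Rightarrow> real) \<Rightarrow> bool" where
  "is_trace \<Omega> p u G g \<longleftrightarrow> g \<in> borel_measurable borel \<and>
     (\<exists>v :: nat \<Rightarrow> 'a \<Rightarrow> real. (\<forall>n. C1_fun (v n)) \<and>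
        ((\<lambda>n. \<integral>\<^sup>+ x. ennreal (\<bar>v n x - u x\<bar> powr p + norm (grad (v n) x - G x) powr p)
                  \<partial>lebesgue_on \<Omega>) \<longlonglongrightarrow> 0) \<and>
        ((\<lambda>n. \<integral>\<^sup>+ x. ennreal (\<bar>v n x - g x\<bar> powr p)
                  \<partial>restrict_space surface_measure (frontier \<Omega>)) \<longlonglongrightarrow> 0))"

end

theory Submission
  imports Defs
begin

lemma haus_delta_le_cover:
  assumes "A \<subseteq> (\<Union>n. C n)" "\<And>n. diameter (C n) \<le> \<delta>"
  shows "haus_delta m \<delta> A \<le> (\<Sum>n. haus_piece m (C n))"
  unfolding haus_delta_def by (rule INF_lower) (use assms in auto)

lemma hausdorff_le:
  assumes "\<And>\<delta>. \<delta> > 0 \<Longrightarrow> haus_delta m \<delta> A \<le> K"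
  shows "hausdorff_measure m A \<le> K"
  unfolding hausdorff_measure_def by (rule SUP_least) (use assms in auto)

lemma haus_delta_mono:
  assumes "A \<subseteq> B"
  shows "haus_delta m \<delta> A \<le> haus_delta m \<delta> B"
  unfolding haus_delta_def by (rule INF_superset_mono) (use assms in auto)

lemma hausdorff_mono:
  assumes "A \<subseteq> B"
  shows "hausdorff_measure m A \<le> hausdorff_measure m B"
  unfolding hausdorff_measure_def by (rule SUP_mono) (use haus_delta_mono[OF assms] in auto)

lemma haus_delta_finite_cover:
  assumes "finite K" "A \<subseteq> (\<Union>k\<in>K. D k)" "\<And>k. k \<in> K \<Longrightarrow> diameter (D k) \<le> \<delta>"
    "\<And>k. k \<in> K \<Longrightarrow> haus_piece m (D k) \<le> P" "\<delta> \<ge> 0"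
  shows "haus_delta m \<delta> A \<le> of_nat (card K) * P"
proof -
  obtain f where f: "bij_betw f {0..<card K} K"
    using ex_bij_betw_nat_finite[OF assms(1)] by blast
  define C where "C n = (if n < card K then D (f n) else {})" for n
  have "A \<subseteq> (\<Union>n. C n)"
  proof
    fix x assume "x \<in> A"
    then obtain k where k: "k \<in> K" "x \<in> D k" using assms(2) by blast
    then obtain n where "n < card K" "f n = k" using f unfolding bij_betw_def by force
    then show "x \<in> (\<Union>n. C n)" using k unfolding C_def by auto
  qed
  moreover have "diameter (C n) \<le> \<delta>" for n
    using assms(3,5) bij_betwE[OF f] unfolding C_def by auto
  ultimately have "haus_delta m \<delta> A \<le> (\<Sum>n. haus_piece m (C n))"
    by (rule haus_delta_le_cover)
  also have "(\<Sum>n. haus_piece m (C n)) = (\<Sum>n\<in>{0..<card K}. haus_piece m (C n))"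
    by (rule suminf_finite) (auto simp: C_def haus_piece_def)
  also have "\<dots> = (\<Sum>n\<in>{0..<card K}. haus_piece m (D (f n)))"
    by (rule sum.cong) (auto simp: C_def)
  also have "\<dots> \<le> (\<Sum>n\<in>{0..<card K}. P)"
    by (rule sum_mono) (use bij_betwE[OF f] assms(4) in auto)
  also have "\<dots> = of_nat (card K) * P" by simp
  finally show ?thesis .
qed

lemma frechet_grad:
  fixes h :: "'a::euclidean_space \<Rightarrow> real"
  assumes "h differentiable (at z)"
  shows "frechet_derivative h (at z) v = grad h z \<bullet> v"
proof -
  have lin: "linear (frechet_derivative h (at z))"
    using assms frechet_derivative_works has_derivative_linear by blast
  have "frechet_derivative h (at z) v = frechet_derivative h (at z) (\<Sum>b\<in>Basis. (v \<bullet> b) *\<^sub>R b)"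
    by (simp add: euclidean_representation)
  also have "\<dots> = (\<Sum>b\<in>Basis. (v \<bullet> b) * frechet_derivative h (at z) b)"
    using lin by (simp add: linear_sum linear_scale)
  also have "\<dots> = grad h z \<bullet> v"
    unfolding grad_def by (simp add: inner_sum_right inner_commute mult.commute)
  finally show ?thesis .
qed

lemma C1_lipschitz:
  fixes h :: "'a::euclidean_space \<Rightarrow> real"
  assumes "C1_fun h" "convex U" "compact U"
  obtains B where "B \<ge> 0" "\<And>z z'. z \<in> U \<Longrightarrow> z' \<in> U \<Longrightarrow> \<bar>h z - h z'\<bar> \<le> B * norm (z - z')"
proof -
  have diff: "\<And>x. h differentiable (at x)" and cont: "continuous_on UNIV (grad h)"
    using assms(1) unfolding C1_fun_def by auto
  have "compact (grad h ` U)"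
    using compact_continuous_image[OF continuous_on_subset[OF cont] assms(3)] by auto
  then obtain B0 where B0: "\<And>z. z \<in> U \<Longrightarrow> norm (grad h z) \<le> B0"
    using compact_imp_bounded bounded_iff by (metis image_eqI)
  define B where "B = max B0 0"
  have "\<bar>h z - h z'\<bar> \<le> B * norm (z - z')" if "z \<in> U" "z' \<in> U" for z z'
  proof -
    have "norm (h z - h z') \<le> B * norm (z - z')"
    proof (rule differentiable_bound[OF assms(2), where f' = "\<lambda>x. frechet_derivative h (at x)"])
      show "(h has_derivative frechet_derivative h (at x)) (at x within U)" for x
        using diff frechet_derivative_works has_derivative_at_withinI by blast
      show "onorm (frechet_derivative h (at x)) \<le> B" if "x \<in> U" for x
      proof (rule onorm_le)
        fix v
        have "norm (frechet_derivative h (at x) v) = \<bar>grad h x \<bullet> v\<bar>"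
          using frechet_grad[OF diff] by simp
        also have "\<dots> \<le> norm (grad h x) * norm v" by (rule Cauchy_Schwarz_ineq2)
        also have "\<dots> \<le> B * norm v"
          using B0[OF that] by (intro mult_right_mono) (auto simp: B_def)
        finally show "norm (frechet_derivative h (at x) v) \<le> B * norm v" .
      qed
    qed fact+
    then show ?thesis by simp
  qed
  moreover have "B \<ge> 0" by (simp add: B_def)
  ultimately show ?thesis using that by blast
qed

lemma pow_aux: "(a::real)^m * (c * b^m) = c * (a*b)^m" by (simp add: power_mult_distrib)

lemma haus_const_nonneg: "haus_const m \<ge> 0"
  unfolding haus_const_def by (intro divide_nonneg_pos) auto

lemma graph_hausdorff_finite:
  fixes e x :: "'a::euclidean_space" and h :: "'a \<Rightarrow> real"
  assumes e: "norm e = 1" and h: "C1_fun h" and hc: "\<And>y t. h (y + t *\<^sub>R e) = h y" and r: "r \<ge> 0"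
  shows "hausdorff_measure (DIM('a) - 1) {y \<in> cball x r. y \<bullet> e = h y} < \<infinity>"
proof -
  define S where "S = {y \<in> cball x r. y \<bullet> e = h y}"
  have "e \<noteq> 0" using e by auto
  then obtain b where b: "b \<in> Basis" "e \<bullet> b \<noteq> 0"
    using euclidean_all_zero_iff by blast
  define R where "R = (norm x + r) * (1 + 1 / \<bar>e \<bullet> b\<bar>) + 1"
  have R0: "R > 0" unfolding R_def using r by (intro add_nonneg_pos mult_nonneg_nonneg) auto
  define T where "T = {w::'a. w \<bullet> b = 0 \<and> (\<forall>b'\<in>Basis. \<bar>w \<bullet> b'\<bar> \<le> R)}"
  define U where "U = cball (0::'a) (DIM('a) * R)"
  have TU: "T \<subseteq> U"
  proof
    fix w assume "w \<in> T"
    have "norm w \<le> (\<Sum>b'\<in>Basis. \<bar>w \<bullet> b'\<bar>)" by (rule norm_le_l1)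
    also have "\<dots> \<le> of_nat (card (Basis::'a set)) * R"
      by (rule sum_bounded_above) (use \<open>w \<in> T\<close> in \<open>auto simp: T_def\<close>)
    finally show "w \<in> U" by (simp add: U_def)
  qed
  obtain B where B: "B \<ge> 0" "\<And>z z'. z \<in> U \<Longrightarrow> z' \<in> U \<Longrightarrow> \<bar>h z - h z'\<bar> \<le> B * norm (z - z')"
    using C1_lipschitz[OF h, of U] unfolding U_def by auto
  define L where "L = 2 + B"
  have L0: "L > 0" using B by (simp add: L_def)
  define F where "F w = w + (h w - w \<bullet> e) *\<^sub>R e" for w
  have Lip: "norm (F w - F w') \<le> L * norm (w - w')" if "w \<in> U" "w' \<in> U" for w w'
  proof -
    have "F w - F w' = (w - w') + ((h w - h w') - (w - w') \<bullet> e) *\<^sub>R e"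
      by (simp add: F_def algebra_simps inner_diff_left)
    then have "norm (F w - F w') \<le> norm (w - w') + \<bar>(h w - h w') - (w - w') \<bullet> e\<bar>"
      using e by (metis mult.right_neutral norm_scaleR norm_triangle_ineq real_norm_def)
    also have "\<dots> \<le> norm (w - w') + (\<bar>h w - h w'\<bar> + \<bar>(w - w') \<bullet> e\<bar>)" by simp
    also have "\<bar>(w - w') \<bullet> e\<bar> \<le> norm (w - w')"
      using Cauchy_Schwarz_ineq2[of "w - w'" e] e by simp
    also have "\<bar>h w - h w'\<bar> \<le> B * norm (w - w')" using B that by blast
    finally show ?thesis by (simp add: L_def algebra_simps)
  qed
  define m where "m = DIM('a) - 1"
  define c where "c = haus_const m"
  have c0: "c \<ge> 0" unfolding c_def by (rule haus_const_nonneg)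
  define Kc where "Kc = c * (L * DIM('a) * R) ^ m"
  have main: "haus_delta m \<delta> S \<le> ennreal Kc" if \<delta>: "\<delta> > 0" for \<delta>
  proof -
    obtain n :: nat where n: "L * DIM('a) * R / \<delta> \<le> n" using real_arch_simple by blast
    define N where "N = max 1 n"
    have N1: "N \<ge> 1" by (simp add: N_def)
    have "real n \<le> real N" by (simp add: N_def)
    then have "L * DIM('a) * R / \<delta> \<le> real N" using n by linarith
    then have NLR: "L * DIM('a) * R \<le> \<delta> * N"
      using \<delta> by (simp add: pos_divide_le_eq mult.commute)
    define s where "s = R / N"
    have s0: "s > 0" using R0 N1 by (simp add: s_def)
    have Ns: "N * s = R" using N1 by (simp add: s_def)
    have Lds: "L * DIM('a) * s \<le> \<delta>"
    proof -
      have "L * DIM('a) * s = (L * DIM('a) * R) / N" by (simp add: s_def)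
      also have "\<dots> \<le> \<delta>" using NLR N1 by (simp add: pos_divide_le_eq)
      finally show ?thesis .
    qed
    define K where "K = PiE (Basis - {b}) (\<lambda>_. {- int N..<int N})"
    define Q where "Q k = {w\<in>T. \<forall>b'\<in>Basis-{b}. of_int (k b') * s \<le> w \<bullet> b' \<and> w \<bullet> b' \<le> (of_int (k b') + 1) * s}" for k :: "'a \<Rightarrow> int"
    have finK: "finite K" unfolding K_def by (intro finite_PiE) auto
    have cover: "S \<subseteq> (\<Union>k\<in>K. F ` Q k)"
    proof
      fix y assume "y \<in> S"
      then have y: "dist x y \<le> r" "y \<bullet> e = h y" by (auto simp: S_def)
      define t where "t = (y \<bullet> b) / (e \<bullet> b)"
      define w where "w = y - t *\<^sub>R e"
      have wb: "w \<bullet> b = 0" using b by (simp add: w_def t_def inner_diff_left)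
      have ny: "norm y \<le> norm x + r" using y(1) norm_triangle_ineq2[of y x]
        by (simp add: dist_norm norm_minus_commute)
      have "norm w \<le> norm y + \<bar>t\<bar>" using norm_triangle_ineq4[of y "t *\<^sub>R e"] e by (simp add: w_def)
      also have "\<bar>t\<bar> \<le> norm y / \<bar>e \<bullet> b\<bar>"
        unfolding t_def abs_divide using Basis_le_norm[OF b(1), of y] b(2)
        by (simp add: divide_right_mono)
      also have "norm y + norm y / \<bar>e \<bullet> b\<bar> = norm y * (1 + 1 / \<bar>e \<bullet> b\<bar>)"
        by (simp add: field_simps)
      also have "\<dots> \<le> (norm x + r) * (1 + 1 / \<bar>e \<bullet> b\<bar>)"
        using ny by (intro mult_right_mono) auto
      finally have nw: "norm w \<le> R" unfolding R_def by simp
      have wT: "w \<in> T" unfolding T_def using wb nw by (auto intro: order_trans[OF Basis_le_norm])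
      have Fw: "F w = y"
      proof -
        have "h w = h y" unfolding w_def using hc[of y "- t"] by simp
        moreover have "w \<bullet> e = y \<bullet> e - t" using e by (simp add: w_def inner_diff_left dot_square_norm)
        ultimately show ?thesis using y(2) by (simp add: F_def w_def algebra_simps)
      qed
      define k where "k = restrict (\<lambda>b'. min (int N - 1) \<lfloor>(w \<bullet> b') / s\<rfloor>) (Basis - {b})"
      have kK: "k \<in> K"
      proof -
        have "- int N \<le> \<lfloor>(w \<bullet> b') / s\<rfloor>" if "b' \<in> Basis" for b'
        proof -
          have "- R \<le> w \<bullet> b'" using wT that unfolding T_def by auto
          then have "- real N \<le> (w \<bullet> b') / s" using s0 Ns by (simp add: field_simps)
          then show ?thesis by linarith
        qed
        then show ?thesis using N1 unfolding K_def k_def by auto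
      qed
      have wQ: "w \<in> Q k"
      proof -
        have "of_int (k b') * s \<le> w \<bullet> b' \<and> w \<bullet> b' \<le> (of_int (k b') + 1) * s"
          if "b' \<in> Basis - {b}" for b'
        proof -
          define a where "a = (w \<bullet> b') / s"
          have wa: "w \<bullet> b' = a * s" using s0 by (simp add: a_def)
          have "w \<bullet> b' \<le> R" using wT that unfolding T_def by auto
          then have aN: "a \<le> N" using s0 Ns by (simp add: a_def field_simps)
          have kb: "k b' = min (int N - 1) \<lfloor>a\<rfloor>" using that by (simp add: k_def a_def)
          have "of_int (k b') \<le> a" "a \<le> of_int (k b') + 1"
            using kb aN by (auto simp: min_def split: if_splits) linarith+
          then show ?thesis unfolding wa using s0 by (auto intro: mult_right_mono)
        qed
        then show ?thesis using wT by (auto simp: Q_def)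
      qed
      show "y \<in> (\<Union>k\<in>K. F ` Q k)" using kK wQ Fw by blast
    qed
    have diam: "\<forall>p\<in>F ` Q k. \<forall>q\<in>F ` Q k. norm (p - q) \<le> L * DIM('a) * s" for k
    proof (intro ballI)
      fix p q assume "p \<in> F ` Q k" "q \<in> F ` Q k"
      then obtain w w' where ww: "w \<in> Q k" "w' \<in> Q k" "p = F w" "q = F w'" by auto
      then have wT: "w \<in> T" "w' \<in> T" by (auto simp: Q_def)
      have "norm (p - q) \<le> L * norm (w - w')" using Lip wT TU ww by auto
      also have "norm (w - w') \<le> (\<Sum>b'\<in>Basis. \<bar>(w - w') \<bullet> b'\<bar>)" by (rule norm_le_l1)
      also have "\<dots> \<le> of_nat DIM('a) * s"
      proof (rule sum_bounded_above)
        fix b' :: 'a assume b': "b' \<in> Basis"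
        show "\<bar>(w - w') \<bullet> b'\<bar> \<le> s"
        proof (cases "b' = b")
          case True then show ?thesis using wT s0 by (simp add: T_def inner_diff_left)
        next
          case False
          then have "of_int (k b') * s \<le> w \<bullet> b' \<and> w \<bullet> b' \<le> (of_int (k b') + 1) * s"
            "of_int (k b') * s \<le> w' \<bullet> b' \<and> w' \<bullet> b' \<le> (of_int (k b') + 1) * s"
            using ww b' by (auto simp: Q_def)
          then show ?thesis by (simp add: inner_diff_left algebra_simps abs_le_iff)
        qed
      qed
      finally show "norm (p - q) \<le> L * DIM('a) * s" using L0 by (simp add: mult.assoc)
    qed
    have diam2: "diameter (F ` Q k) \<le> L * DIM('a) * s" for k
      by (rule diameter_le) (use diam[of k] L0 s0 in auto)
    have bdd: "bounded (F ` Q k)" for k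
    proof (cases "F ` Q k = {}")
      case False
      then obtain p where "p \<in> F ` Q k" by auto
      then show ?thesis unfolding bounded_def
        by (intro exI[of _ p] exI[of _ "L * DIM('a) * s"]) (use diam[of k] in \<open>auto simp: dist_norm\<close>)
    qed simp
    have piece: "haus_piece m (F ` Q k) \<le> ennreal (c * (L * DIM('a) * s / 2) ^ m)" for k
    proof (cases "F ` Q k = {}")
      case False
      have "c * (diameter (F ` Q k) / 2) ^ m \<le> c * (L * DIM('a) * s / 2) ^ m"
        using diam2[of k] diameter_ge_0[OF bdd[of k]] c0
        by (intro mult_left_mono power_mono) auto
      then show ?thesis using False by (simp add: haus_piece_def c_def ennreal_leI)
    qed (simp add: haus_piece_def)
    have "haus_delta m \<delta> S \<le> of_nat (card K) * ennreal (c * (L * DIM('a) * s / 2) ^ m)"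
      by (rule haus_delta_finite_cover[OF finK cover]) (use diam2 Lds piece \<delta> in \<open>auto intro: order_trans\<close>)
    also have "card K = (2 * N) ^ m"
    proof -
      have "nat (int N - - int N) = 2 * N" by simp
      then show ?thesis unfolding K_def using b(1) by (simp add: card_PiE m_def card_Diff_singleton)
    qed
    also have "of_nat ((2 * N) ^ m) * ennreal (c * (L * DIM('a) * s / 2) ^ m)
        = ennreal (real ((2 * N) ^ m) * (c * (L * DIM('a) * s / 2) ^ m))"
      using c0 L0 s0 by (simp add: ennreal_of_nat_eq_real_of_nat ennreal_mult)
    also have "real ((2 * N) ^ m) * (c * (L * DIM('a) * s / 2) ^ m) = c * (real (2 * N) * (L * DIM('a) * s / 2)) ^ m"
      unfolding of_nat_power by (rule pow_aux)
    also have "real (2 * N) * (L * DIM('a) * s / 2) = L * DIM('a) * R"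
      using Ns by (simp add: algebra_simps)
    finally show ?thesis by (simp add: Kc_def)
  qed
  have "hausdorff_measure m S \<le> ennreal Kc" by (rule hausdorff_le) (rule main)
  from le_less_trans[OF this ennreal_less_top] show ?thesis unfolding S_def m_def by simp
qed

lemma C1_continuous: "C1_fun h \<Longrightarrow> continuous_on UNIV h"
  unfolding C1_fun_def
  by (meson differentiable_at_imp_differentiable_on differentiable_imp_continuous_on)

lemma frontier_chart_subset:
  fixes \<Omega> :: "'a::euclidean_space set"
  assumes "open \<Omega>" "C1_fun h" "\<Omega> \<inter> ball z r = {y \<in> ball z r. y \<bullet> e < h y}"
  shows "frontier \<Omega> \<inter> ball z r \<subseteq> {y \<in> cball z r. y \<bullet> e = h y}"
proof
  fix y assume y: "y \<in> frontier \<Omega> \<inter> ball z r"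
  then have yc: "y \<in> closure \<Omega>" and yn: "y \<notin> \<Omega>" and yb: "y \<in> ball z r"
    using assms(1) by (auto simp: frontier_def interior_open)
  have ge: "\<not> y \<bullet> e < h y" using yn yb assms(3) by blast
  have "\<not> h y < y \<bullet> e"
  proof
    assume lt: "h y < y \<bullet> e"
    define V where "V = ball z r \<inter> {p. h p < p \<bullet> e}"
    have "open {p. h p < p \<bullet> e}"
      by (rule open_Collect_less) (use C1_continuous[OF assms(2)] in \<open>auto intro: continuous_intros\<close>)
    then have oV: "open V" unfolding V_def by auto
    have "y \<in> V \<inter> closure \<Omega>" using lt yb yc by (auto simp: V_def)
    then have "V \<inter> \<Omega> \<noteq> {}" using open_Int_closure_eq_empty[OF oV, of \<Omega>] by auto
    then obtain p where p: "p \<in> V" "p \<in> \<Omega>" by auto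
    then have "p \<in> \<Omega> \<inter> ball z r" by (auto simp: V_def)
    then have "p \<bullet> e < h p" using assms(3) by blast
    then show False using p by (auto simp: V_def)
  qed
  with ge yb show "y \<in> {y \<in> cball z r. y \<bullet> e = h y}" by auto
qed

lemma surface_measure_sets: "sets (surface_measure :: 'a::euclidean_space measure) = sets borel"
  unfolding surface_measure_def
  using sets.sigma_sets_eq[of "borel :: 'a measure"] by (simp add: sets_measure_of_conv)

lemma surface_measure_emeasure:
  assumes "measure_space UNIV (sets borel) (hausdorff_measure (DIM('a) - 1) :: 'a set \<Rightarrow> ennreal)" "A \<in> sets borel"
  shows "emeasure (surface_measure :: 'a::euclidean_space measure) A = hausdorff_measure (DIM('a) - 1) A"
  unfolding surface_measure_def
  by (rule emeasure_measure_of_sigma) (use assms in \<open>auto simp: measure_space_def\<close>)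

lemma frontier_surface_finite:
  fixes \<Omega> :: "'a::euclidean_space set"
  assumes "open \<Omega>" "bounded \<Omega>" "C1_boundary \<Omega>"
    and ms: "measure_space UNIV (sets borel) (hausdorff_measure (DIM('a) - 1) :: 'a set \<Rightarrow> ennreal)"
  shows "emeasure (surface_measure :: 'a measure) (frontier \<Omega>) < \<infinity>"
proof -
  let ?M = "surface_measure :: 'a measure"
  have loc: "\<exists>r>0. emeasure ?M (frontier \<Omega> \<inter> ball z r) < \<infinity>" if z: "z \<in> frontier \<Omega>" for z
  proof -
    obtain e r h where ch: "norm e = 1" "r > 0" "C1_fun h" "\<forall>y t. h (y + t *\<^sub>R e) = h y"
      "\<Omega> \<inter> ball z r = {y \<in> ball z r. y \<bullet> e < h y}"
      using assms(3) z unfolding C1_boundary_def by blast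
    have "emeasure ?M (frontier \<Omega> \<inter> ball z r) = hausdorff_measure (DIM('a) - 1) (frontier \<Omega> \<inter> ball z r)"
      by (rule surface_measure_emeasure[OF ms]) auto
    also have "\<dots> \<le> hausdorff_measure (DIM('a) - 1) {y \<in> cball z r. y \<bullet> e = h y}"
      by (rule hausdorff_mono[OF frontier_chart_subset[OF assms(1) ch(3) ch(5)]])
    also have "\<dots> < \<infinity>"
      by (rule graph_hausdorff_finite) (use ch in auto)
    finally show ?thesis using ch(2) by blast
  qed
  then obtain rr where rr: "\<And>z. z \<in> frontier \<Omega> \<Longrightarrow> rr z > 0 \<and> emeasure ?M (frontier \<Omega> \<inter> ball z (rr z)) < \<infinity>"
    by metis
  have "compact (frontier \<Omega>)" using assms(2) by (rule compact_frontier_bounded)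
  then obtain C' where C': "C' \<subseteq> frontier \<Omega>" "finite C'" "frontier \<Omega> \<subseteq> (\<Union>z\<in>C'. ball z (rr z))"
    by (rule compactE_image[where C = "frontier \<Omega>" and f = "\<lambda>z. ball z (rr z)"]) (use rr in auto)
  have "open (\<Union>z\<in>C'. ball z (rr z))" by auto
  then have "frontier \<Omega> \<inter> (\<Union>z\<in>C'. ball z (rr z)) \<in> sets borel" by auto
  moreover have "(\<Union>z\<in>C'. frontier \<Omega> \<inter> ball z (rr z)) = frontier \<Omega> \<inter> (\<Union>z\<in>C'. ball z (rr z))" by auto
  ultimately have "(\<Union>z\<in>C'. frontier \<Omega> \<inter> ball z (rr z)) \<in> sets ?M" by (simp add: surface_measure_sets)
  then have "emeasure ?M (frontier \<Omega>) \<le> emeasure ?M (\<Union>z\<in>C'. frontier \<Omega> \<inter> ball z (rr z))"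
    by (rule emeasure_mono[rotated]) (use C' in auto)
  also have "\<dots> \<le> (\<Sum>z\<in>C'. emeasure ?M (frontier \<Omega> \<inter> ball z (rr z)))"
    by (rule emeasure_subadditive_finite) (use C' in \<open>auto simp: surface_measure_sets\<close>)
  also have "\<dots> < \<infinity>"
    using C' rr by (simp add: less_top[symmetric] subset_iff)
  finally show ?thesis .
qed

lemma powr_aux1:
  fixes a \<gamma> :: real
  assumes "0 \<le> a" "1 < \<gamma>"
  shows "a powr (\<gamma> - 1) \<le> 1 + a powr \<gamma>"
proof (cases "a \<le> 1")
  case True
  then have "a powr (\<gamma> - 1) \<le> 1" using assms by (intro powr_le1) auto
  then show ?thesis by (smt (verit) powr_ge_zero)
next
  case False
  then have "a powr (\<gamma> - 1) \<le> a powr \<gamma>" by (intro powr_mono) auto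
  then show ?thesis by simp
qed

lemma powr_aux2:
  fixes a s t p :: real
  assumes "0 \<le> a" "0 \<le> s" "0 \<le> t" "a \<le> s + t" "0 \<le> p"
  shows "a powr p \<le> 2 powr p * (s powr p + t powr p)"
proof -
  have "a \<le> 2 * max s t" using assms by linarith
  then have "a powr p \<le> (2 * max s t) powr p" using assms by (intro powr_mono2) auto
  also have "\<dots> = 2 powr p * max s t powr p" using assms by (simp add: powr_mult)
  also have "max s t powr p \<le> s powr p + t powr p"
    by (cases "s \<le> t") (auto simp: max_def)
  finally show ?thesis by (simp add: mult_left_mono)
qed

lemma powr_aux0:
  fixes a p :: real
  assumes "0 \<le> a" "1 \<le> p"
  shows "a \<le> 1 + a powr p"
proof (cases "a \<le> 1")
  case True then show ?thesis by (smt (verit) powr_ge_zero)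
next
  case False
  then have "a powr 1 \<le> a powr p" using assms by (intro powr_mono) auto
  then show ?thesis using False by simp
qed

theorem lemma5p5:
  fixes \<Omega> \<Gamma>D \<Gamma>N :: "'a::euclidean_space set"
    and \<alpha> \<beta> :: real
    and j u g :: "'a \<Rightarrow> real"
    and G :: "'a \<Rightarrow> 'a"
  defines "\<gamma> \<equiv> (\<beta> + 1) / \<beta> * \<alpha>"
  defines "\<gamma>' \<equiv> \<gamma> / (\<gamma> - 1)"
  assumes \<Omega>: "open \<Omega>" "bounded \<Omega>" "connected \<Omega>" "C1_boundary \<Omega>"
    and \<Gamma>D: "openin (top_of_set (frontier \<Omega>)) \<Gamma>D" "\<Gamma>D \<noteq> {}"
          "emeasure surface_measure \<Gamma>D > 0"
    and \<Gamma>N: "openin (top_of_set (frontier \<Omega>)) \<Gamma>N" "\<Gamma>N \<noteq> {}"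
          "emeasure surface_measure \<Gamma>N > 0"
    and disj: "\<Gamma>D \<inter> \<Gamma>N = {}"
    and cover: "frontier \<Omega> = closure (\<Gamma>D \<union> \<Gamma>N)"
    and interface: "emeasure surface_measure ((closure \<Gamma>D - \<Gamma>D) \<inter> (closure \<Gamma>N - \<Gamma>N)) = 0"
    and exps: "\<alpha> > 1" "\<beta> > 0"
    and j: "j \<in> borel_measurable surface_measure"
           "set_integrable surface_measure \<Gamma>N (\<lambda>x. \<bar>j x\<bar> powr \<gamma>')"
           "AE x in surface_measure. x \<in> \<Gamma>N \<longrightarrow> j x \<ge> 0"
           "\<not> (AE x in surface_measure. x \<in> \<Gamma>N \<longrightarrow> j x = 0)"
    and u: "sobolev \<Omega> \<gamma> u G"
    and trace: "is_trace \<Omega> \<gamma> u G g"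
  shows "\<exists>!\<kappa>::real. (LINT x:\<Gamma>D|surface_measure. (max (g x + \<kappa>) 0) powr (\<gamma> - 1))
                    = (LINT x:\<Gamma>N|surface_measure. j x)"
proof -
  let ?M = "surface_measure :: 'a measure"
  define Fr where "Fr = frontier \<Omega>"
  have "1 \<le> (\<beta> + 1) / \<beta>" using exps by (simp add: field_simps)
  then have \<gamma>1: "\<gamma> > 1" unfolding \<gamma>_def using exps
    by (metis less_1_mult mult.commute mult_cancel_right1 order_le_less)
  have \<gamma>'1: "\<gamma>' \<ge> 1" unfolding \<gamma>'_def using \<gamma>1 by (simp add: field_simps)
  have setsM: "sets ?M = sets borel" by (rule surface_measure_sets)
  have spaceM: "space ?M = UNIV" by (simp add: surface_measure_def)
  have ms: "measure_space UNIV (sets borel) (hausdorff_measure (DIM('a) - 1) :: 'a set \<Rightarrow> ennreal)"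
  proof (rule ccontr)
    assume "\<not> ?thesis"
    then have "emeasure ?M \<Gamma>D = 0" unfolding surface_measure_def
      using sets.sigma_sets_eq[of "borel::'a measure"] by (simp add: emeasure_measure_of_conv)
    with \<Gamma>D(3) show False by simp
  qed
  have finFr: "emeasure ?M Fr < \<infinity>"
    using frontier_surface_finite[OF \<Omega>(1,2,4) ms] by (simp add: Fr_def)
  have DFr: "\<Gamma>D \<subseteq> Fr" using openin_imp_subset[OF \<Gamma>D(1)] by (simp add: Fr_def)
  have NFr: "\<Gamma>N \<subseteq> Fr" using openin_imp_subset[OF \<Gamma>N(1)] by (simp add: Fr_def)
  have FrM[measurable]: "Fr \<in> sets ?M" using setsM by (simp add: Fr_def)
  have DM[measurable]: "\<Gamma>D \<in> sets ?M"
  proof -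
    obtain T where "open T" "\<Gamma>D = frontier \<Omega> \<inter> T" using \<Gamma>D(1) openin_open by metis
    then show ?thesis using setsM by auto
  qed
  have NM[measurable]: "\<Gamma>N \<in> sets ?M"
  proof -
    obtain T where "open T" "\<Gamma>N = frontier \<Omega> \<inter> T" using \<Gamma>N(1) openin_open by metis
    then show ?thesis using setsM by auto
  qed
  have finD: "emeasure ?M \<Gamma>D < \<infinity>" using emeasure_mono[OF DFr FrM] finFr by (meson le_less_trans)
  have finN: "emeasure ?M \<Gamma>N < \<infinity>" using emeasure_mono[OF NFr FrM] finFr by (meson le_less_trans)
  have gM[measurable]: "g \<in> borel_measurable ?M"
    using trace measurable_cong_sets[OF setsM refl] unfolding is_trace_def by blast
  have gle: "{x. a \<le> g x} \<in> sets ?M" for a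
  proof -
    have "g -` {a..} \<inter> space ?M \<in> sets ?M" by (rule measurable_sets[OF gM]) simp
    then show ?thesis by (simp add: spaceM vimage_def)
  qed
  have jM[measurable]: "j \<in> borel_measurable ?M" by (rule j(1))

  define c where "c = (LINT x:\<Gamma>N|?M. j x)"
  have c_eq: "c = integral\<^sup>L ?M (\<lambda>x. indicator \<Gamma>N x * j x)"
    unfolding c_def set_lebesgue_integral_def by simp
  have jint: "integrable ?M (\<lambda>x. indicator \<Gamma>N x * j x)"
  proof (rule Bochner_Integration.integrable_bound)
    have "integrable ?M (indicator \<Gamma>N :: 'a \<Rightarrow> real)" using finN by simp
    moreover have "integrable ?M (\<lambda>x. indicator \<Gamma>N x * \<bar>j x\<bar> powr \<gamma>')"
      using j(2) unfolding set_integrable_def by simp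
    ultimately have "integrable ?M (\<lambda>x. indicator \<Gamma>N x + indicator \<Gamma>N x * \<bar>j x\<bar> powr \<gamma>')"
      by (rule Bochner_Integration.integrable_add)
    then show "integrable ?M (\<lambda>x. indicator \<Gamma>N x * (1 + \<bar>j x\<bar> powr \<gamma>'))"
      by (simp add: distrib_left)
    show "(\<lambda>x. indicator \<Gamma>N x * j x) \<in> borel_measurable ?M" by measurable
    show "AE x in ?M. norm (indicator \<Gamma>N x * j x) \<le> norm (indicator \<Gamma>N x * (1 + \<bar>j x\<bar> powr \<gamma>'))"
      using powr_aux0[OF abs_ge_zero \<gamma>'1] by (intro AE_I2) (auto simp: indicator_def)
  qed
  have nonneg: "AE x in ?M. 0 \<le> indicator \<Gamma>N x * j x"
    using j(3) by eventually_elim (auto simp: indicator_def)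
  have "c \<noteq> 0"
  proof
    assume "c = 0"
    then have "AE x in ?M. indicator \<Gamma>N x * j x = 0"
      using integral_nonneg_eq_0_iff_AE[OF jint nonneg] c_eq by simp
    then have "AE x in ?M. x \<in> \<Gamma>N \<longrightarrow> j x = 0" by eventually_elim (auto simp: indicator_def)
    with j(4) show False by simp
  qed
  moreover have "c \<ge> 0" using integral_nonneg_AE[OF nonneg] c_eq by simp
  ultimately have cpos: "c > 0" by simp

  obtain v where v: "\<forall>n. C1_fun (v n)"
    "(\<lambda>n. \<integral>\<^sup>+ x. ennreal (\<bar>v n x - g x\<bar> powr \<gamma>) \<partial>restrict_space ?M (frontier \<Omega>)) \<longlonglongrightarrow> 0"
    using trace unfolding is_trace_def by blast
  obtain n where n: "(\<integral>\<^sup>+ x. ennreal (\<bar>v n x - g x\<bar> powr \<gamma>) \<partial>restrict_space ?M (frontier \<Omega>)) < 1"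
    using order_tendstoD(2)[OF v(2), of 1] by (auto simp: eventually_sequentially)
  define v0 where "v0 = v n"
  have v0c: "continuous_on UNIV v0" unfolding v0_def by (rule C1_continuous) (use v(1) in blast)
  have v0M[measurable]: "v0 \<in> borel_measurable ?M"
    using borel_measurable_continuous_onI[OF v0c] measurable_cong_sets[OF setsM refl] by blast
  have "compact Fr" unfolding Fr_def using \<Omega>(2) by (rule compact_frontier_bounded)
  then have "compact (v0 ` Fr)"
    using compact_continuous_image continuous_on_subset[OF v0c] by blast
  then obtain B0 where B0: "\<And>x. x \<in> Fr \<Longrightarrow> \<bar>v0 x\<bar> \<le> B0"
    using compact_imp_bounded bounded_real by (metis image_eqI)
  define B where "B = max B0 0"
  have B1: "B \<ge> 0" by (simp add: B_def)
  have B2: "\<bar>v0 x\<bar> \<le> B" if "x \<in> Fr" for x using B0[OF that] unfolding B_def by (meson max.coboundedI1)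
  note B = B1 B2
  define w where "w x = \<bar>v0 x - g x\<bar> powr \<gamma>" for x
  have w0: "w x \<ge> 0" for x by (simp add: w_def)
  have wint: "integrable ?M (\<lambda>x. indicator Fr x * w x)"
  proof (rule integrableI_bounded)
    show "(\<lambda>x. indicator Fr x * w x) \<in> borel_measurable ?M" unfolding w_def by measurable
    have "(\<integral>\<^sup>+ x. ennreal (norm (indicator Fr x * w x)) \<partial>?M) = (\<integral>\<^sup>+ x. ennreal (w x) * indicator Fr x \<partial>?M)"
      by (rule nn_integral_cong) (auto simp: indicator_def w_def)
    also have "\<dots> = (\<integral>\<^sup>+ x. ennreal (w x) \<partial>restrict_space ?M Fr)"
      by (rule nn_integral_restrict_space[symmetric]) (simp add: spaceM)
    also have "\<dots> < 1" using n unfolding w_def v0_def Fr_def .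
    also have "(1::ennreal) < \<infinity>" by simp
    finally show "(\<integral>\<^sup>+ x. ennreal (norm (indicator Fr x * w x)) \<partial>?M) < \<infinity>" .
  qed

  define \<phi> where "\<phi> \<kappa> x = max (g x + \<kappa>) 0 powr (\<gamma> - 1)" for \<kappa> x
  define F where "F \<kappa> = integral\<^sup>L ?M (\<lambda>x. indicator \<Gamma>D x * \<phi> \<kappa> x)" for \<kappa>
  have F_eq: "(LINT x:\<Gamma>D|?M. max (g x + \<kappa>) 0 powr (\<gamma> - 1)) = F \<kappa>" for \<kappa>
    unfolding F_def \<phi>_def set_lebesgue_integral_def by simp
  define Wb where "Wb K x = indicator \<Gamma>D x * (1 + 2 powr \<gamma> * (B + K) powr \<gamma>) + 2 powr \<gamma> * (indicator Fr x * w x)" for K x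
  have Wb_int: "integrable ?M (Wb K)" for K
  proof -
    have "integrable ?M (\<lambda>x. indicator \<Gamma>D x * (1 + 2 powr \<gamma> * (B + K) powr \<gamma>))"
      using finD by (intro integrable_mult_left) simp
    moreover have "integrable ?M (\<lambda>x. 2 powr \<gamma> * (indicator Fr x * w x))"
      using wint by (intro integrable_mult_right)
    ultimately show ?thesis unfolding Wb_def by (rule Bochner_Integration.integrable_add)
  qed
  have \<phi>_nonneg: "\<phi> \<kappa> x \<ge> 0" for \<kappa> x by (simp add: \<phi>_def)
  have \<phi>_mono: "\<phi> k1 x \<le> \<phi> k2 x" if "k1 \<le> k2" for k1 k2 x
    unfolding \<phi>_def using that \<gamma>1 by (intro powr_mono2) auto
  have \<phi>_bound: "\<phi> \<kappa> x \<le> 1 + 2 powr \<gamma> * ((B + K) powr \<gamma> + w x)" if "\<bar>\<kappa>\<bar> \<le> K" "x \<in> Fr" for \<kappa> K x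
  proof -
    define a where "a = max (g x + \<kappa>) 0"
    have a0: "0 \<le> a" by (simp add: a_def)
    have "\<bar>g x\<bar> \<le> \<bar>v0 x\<bar> + \<bar>v0 x - g x\<bar>" by linarith
    then have "a \<le> (B + K) + \<bar>v0 x - g x\<bar>" using B(2)[OF that(2)] that(1) by (auto simp: a_def)
    then have "a powr \<gamma> \<le> 2 powr \<gamma> * ((B + K) powr \<gamma> + \<bar>v0 x - g x\<bar> powr \<gamma>)"
      using a0 B(1) that(1) \<gamma>1 by (intro powr_aux2) auto
    moreover have "a powr (\<gamma> - 1) \<le> 1 + a powr \<gamma>" using a0 \<gamma>1 by (rule powr_aux1)
    ultimately show ?thesis by (simp add: \<phi>_def a_def w_def)
  qed
  have Wb0: "Wb K x \<ge> 0" for K x unfolding Wb_def using w0 by (auto intro!: add_nonneg_nonneg mult_nonneg_nonneg)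
  have dom: "norm (indicator \<Gamma>D x * \<phi> \<kappa> x) \<le> Wb K x" if "\<bar>\<kappa>\<bar> \<le> K" for \<kappa> K x
  proof (cases "x \<in> \<Gamma>D")
    case True
    then have "x \<in> Fr" using DFr by auto
    then show ?thesis using True \<phi>_bound[OF that \<open>x \<in> Fr\<close>] \<phi>_nonneg[of \<kappa> x]
      by (simp add: Wb_def distrib_left)
  next
    case False then show ?thesis using Wb0[of K x] by simp
  qed
  have \<phi>M[measurable]: "(\<lambda>x. indicator \<Gamma>D x * \<phi> \<kappa> x) \<in> borel_measurable ?M" for \<kappa>
    unfolding \<phi>_def by measurable
  have int_\<phi>: "integrable ?M (\<lambda>x. indicator \<Gamma>D x * \<phi> \<kappa> x)" for \<kappa>
  proof (rule Bochner_Integration.integrable_bound[OF Wb_int[of "\<bar>\<kappa>\<bar>"] \<phi>M])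
    show "AE x in ?M. norm (indicator \<Gamma>D x * \<phi> \<kappa> x) \<le> norm (Wb \<bar>\<kappa>\<bar> x)"
      using dom[of \<kappa> "\<bar>\<kappa>\<bar>"] Wb0[of "\<bar>\<kappa>\<bar>"] by (intro AE_I2) simp
  qed
  have F_mono: "F k1 \<le> F k2" if "k1 \<le> k2" for k1 k2
    unfolding F_def by (rule integral_mono[OF int_\<phi> int_\<phi>]) (auto simp: indicator_def \<phi>_mono[OF that])
  have Fcont: "continuous_on {a..b} F" for a b
  proof (rule continuous_on_sequentiallyI)
    fix u \<kappa> assume u: "\<forall>n. u n \<in> {a..b}" "\<kappa> \<in> {a..b}" "u \<longlonglongrightarrow> \<kappa>"
    define K where "K = max \<bar>a\<bar> \<bar>b\<bar>"
    have uK: "\<bar>u n\<bar> \<le> K" for n using u(1)[rule_format, of n] by (auto simp: K_def)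
    show "(\<lambda>n. F (u n)) \<longlonglongrightarrow> F \<kappa>" unfolding F_def
    proof (rule integral_dominated_convergence[where w = "Wb K"])
      show "integrable ?M (Wb K)" by (rule Wb_int)
      show "AE x in ?M. (\<lambda>n. indicator \<Gamma>D x * \<phi> (u n) x) \<longlonglongrightarrow> indicator \<Gamma>D x * \<phi> \<kappa> x"
      proof (intro AE_I2 tendsto_mult_left)
        fix x
        show "(\<lambda>n. \<phi> (u n) x) \<longlonglongrightarrow> \<phi> \<kappa> x" unfolding \<phi>_def
          by (rule tendsto_powr'[OF tendsto_max[OF tendsto_add[OF tendsto_const u(3)] tendsto_const] tendsto_const])
             (use \<gamma>1 in auto)
      qed
      show "AE x in ?M. norm (indicator \<Gamma>D x * \<phi> (u n) x) \<le> Wb K x" for n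
        using dom[OF uK] by simp
    qed simp_all
  qed
  have low: "\<exists>a. F a < c"
  proof -
    have "(\<lambda>n. F (- real n)) \<longlonglongrightarrow> integral\<^sup>L ?M (\<lambda>x. 0::real)" unfolding F_def
    proof (rule integral_dominated_convergence[where w = "Wb 0"])
      show "integrable ?M (Wb 0)" by (rule Wb_int)
      show "AE x in ?M. (\<lambda>n. indicator \<Gamma>D x * \<phi> (- real n) x) \<longlonglongrightarrow> 0"
      proof (intro AE_I2 tendsto_eventually)
        fix x
        obtain N :: nat where N: "g x < real N" using reals_Archimedean2 by blast
        show "\<forall>\<^sub>F n in sequentially. indicator \<Gamma>D x * \<phi> (- real n) x = 0"
          unfolding eventually_sequentially
        proof (intro exI allI impI)
          fix n assume "N \<le> n"
          then have "g x + - real n < 0" using N by linarith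
          then show "indicator \<Gamma>D x * \<phi> (- real n) x = 0" by (simp add: \<phi>_def)
        qed
      qed
      show "AE x in ?M. norm (indicator \<Gamma>D x * \<phi> (- real n) x) \<le> Wb 0 x" for n
      proof (intro AE_I2)
        fix x
        have "norm (indicator \<Gamma>D x * \<phi> (- real n) x) \<le> norm (indicator \<Gamma>D x * \<phi> 0 x)"
          using \<phi>_mono[of "- real n" 0 x] \<phi>_nonneg[of "- real n" x] by (auto simp: indicator_def)
        also have "\<dots> \<le> Wb 0 x" using dom[of 0 0 x] by simp
        finally show "norm (indicator \<Gamma>D x * \<phi> (- real n) x) \<le> Wb 0 x" .
      qed
    qed simp_all
    then have "(\<lambda>n. F (- real n)) \<longlonglongrightarrow> 0" by simp
    then obtain n where "F (- real n) < c"
      using order_tendstoD(2)[OF _ cpos] by (metis eventually_sequentially order_refl)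
    then show ?thesis by blast
  qed
  have up: "\<exists>b. F b > c"
  proof -
    have "\<exists>n::nat. emeasure ?M (\<Gamma>D \<inter> {x. - real n \<le> g x}) \<noteq> 0"
    proof (rule ccontr)
      assume "\<not> ?thesis"
      moreover have "\<Gamma>D \<inter> {x. - real n \<le> g x} \<in> sets ?M" for n :: nat by (rule sets.Int[OF DM gle])
      ultimately have "\<And>n::nat. \<Gamma>D \<inter> {x. - real n \<le> g x} \<in> null_sets ?M"
        by (auto simp: null_sets_def)
      then have "(\<Union>n::nat. \<Gamma>D \<inter> {x. - real n \<le> g x}) \<in> null_sets ?M" by (rule null_sets_UN)
      moreover have "(\<Union>n::nat. \<Gamma>D \<inter> {x. - real n \<le> g x}) = \<Gamma>D"
      proof safe
        fix x assume "x \<in> \<Gamma>D"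
        obtain N :: nat where "- g x < real N" using reals_Archimedean2 by blast
        then have "x \<in> \<Gamma>D \<inter> {x. - real N \<le> g x}" using \<open>x \<in> \<Gamma>D\<close> by simp
        then show "x \<in> (\<Union>n::nat. \<Gamma>D \<inter> {x. - real n \<le> g x})" by blast
      qed
      ultimately show False using \<Gamma>D(3) by (auto simp: null_sets_def)
    qed
    then obtain n0 :: nat where n0: "emeasure ?M (\<Gamma>D \<inter> {x. - real n0 \<le> g x}) \<noteq> 0" by blast
    define E where "E = \<Gamma>D \<inter> {x. - real n0 \<le> g x}"
    have EM[measurable]: "E \<in> sets ?M" unfolding E_def by (rule sets.Int[OF DM gle])
    have finE: "emeasure ?M E < \<infinity>"
      using emeasure_mono[of E \<Gamma>D ?M] DM finD unfolding E_def by (meson Int_lower1 le_less_trans)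
    define p where "p = measure ?M E"
    have "emeasure ?M E = ennreal p" unfolding p_def using finE by (simp add: emeasure_eq_ennreal_measure)
    then have p0: "p > 0" using n0 unfolding E_def p_def by (metis ennreal_0 measure_nonneg order_le_less)
    define t where "t = (c / p + 1) powr (1 / (\<gamma> - 1))"
    have cp: "c / p + 1 > 0" using cpos p0 by (simp add: add_pos_pos)
    have t0: "t > 0" unfolding t_def using cp by simp
    have tp: "t powr (\<gamma> - 1) = c / p + 1"
      unfolding t_def using cp \<gamma>1 by (simp add: powr_powr)
    define \<kappa> where "\<kappa> = real n0 + t"
    have "integral\<^sup>L ?M (\<lambda>x. indicator E x * (c / p + 1)) \<le> F \<kappa>"
      unfolding F_def
    proof (rule integral_mono)
      show "integrable ?M (\<lambda>x. indicator E x * (c / p + 1))"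
        using finE by (intro integrable_mult_left) simp
      show "integrable ?M (\<lambda>x. indicator \<Gamma>D x * \<phi> \<kappa> x)" by (rule int_\<phi>)
      fix x
      show "indicator E x * (c / p + 1) \<le> indicator \<Gamma>D x * \<phi> \<kappa> x"
      proof (cases "x \<in> E")
        case True
        then have "t \<le> max (g x + \<kappa>) 0" unfolding E_def \<kappa>_def by auto
        then have "t powr (\<gamma> - 1) \<le> \<phi> \<kappa> x" unfolding \<phi>_def using t0 \<gamma>1 by (intro powr_mono2) auto
        then show ?thesis using True tp unfolding E_def by simp
      next
        case False then show ?thesis using \<phi>_nonneg[of \<kappa> x] by (simp add: indicator_def)
      qed
    qed
    moreover have "integral\<^sup>L ?M (\<lambda>x. indicator E x * (c / p + 1)) = p * (c / p + 1)"
      by (simp add: p_def spaceM)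
    moreover have "p * (c / p + 1) = c + p" using p0 by (simp add: field_simps)
    ultimately have "F \<kappa> > c" using p0 by simp
    then show ?thesis by blast
  qed
  obtain a where a: "F a < c" using low by blast
  obtain b where b: "F b > c" using up by blast
  have ab: "a \<le> b"
  proof (rule ccontr)
    assume "\<not> a \<le> b"
    then have "F b \<le> F a" by (intro F_mono) simp
    with a b show False by simp
  qed
  obtain \<kappa>0 where \<kappa>0: "F \<kappa>0 = c"
    using IVT'[of F a c b, OF less_imp_le[OF a] less_imp_le[OF b] ab Fcont] by blast
  have uniq: False if k: "F k1 = c" "F k2 = c" "k1 < k2" for k1 k2
  proof -
    have "integral\<^sup>L ?M (\<lambda>x. indicator \<Gamma>D x * \<phi> k2 x - indicator \<Gamma>D x * \<phi> k1 x) = 0"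
      using k int_\<phi> unfolding F_def by simp
    moreover have "AE x in ?M. 0 \<le> indicator \<Gamma>D x * \<phi> k2 x - indicator \<Gamma>D x * \<phi> k1 x"
      using \<phi>_mono[of k1 k2] k(3) by (intro AE_I2) (auto simp: indicator_def)
    ultimately have "AE x in ?M. indicator \<Gamma>D x * \<phi> k2 x - indicator \<Gamma>D x * \<phi> k1 x = 0"
      using integral_nonneg_eq_0_iff_AE[OF Bochner_Integration.integrable_diff[OF int_\<phi> int_\<phi>]] by simp
    then have "AE x in ?M. indicator \<Gamma>D x * \<phi> k1 x = 0"
    proof eventually_elim
      fix x assume eq: "indicator \<Gamma>D x * \<phi> k2 x - indicator \<Gamma>D x * \<phi> k1 x = 0"
      show "indicator \<Gamma>D x * \<phi> k1 x = 0"
      proof (rule ccontr)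
        assume ne: "indicator \<Gamma>D x * \<phi> k1 x \<noteq> 0"
        then have xD: "x \<in> \<Gamma>D" and "\<phi> k1 x \<noteq> 0" by (auto simp: indicator_def)
        then have pos: "g x + k1 > 0" by (cases "g x + k1 > 0") (auto simp: \<phi>_def)
        have "\<phi> k1 x < \<phi> k2 x" unfolding \<phi>_def using pos k(3) \<gamma>1
          by (intro powr_less_mono2) auto
        with eq xD show False by simp
      qed
    qed
    then have "F k1 = 0" unfolding F_def by (rule integral_eq_zero_AE)
    with k(1) cpos show False by simp
  qed
  show ?thesis unfolding F_eq c_def[symmetric]
  proof (rule ex1I[of _ \<kappa>0])
    show "F \<kappa>0 = c" by (rule \<kappa>0)
    fix y assume "F y = c"
    then show "y = \<kappa>0" using uniq \<kappa>0 by (metis linorder_neqE_linordered_idom)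
  qed
qed

end
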